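(* In the colored-tree setting below, for every color $c\in C$ the map $f_c:V\to T_c$ satisfies $\mathcal L(f_c(v),f_c(v'))\le2|vv'|$ for all $v,v'\in V$.
   Context: Let $(Z,d)$ be a bounded metric space with at least two points. Hyperbolic approximation with parameter $r\in(0,1/6]$: $k_0$ is the largest integer with $\operatorname{diam}Z<r^{k_0}$; for each integer $k\ge k_0$, $V_k\subset Z$ is a maximal $r^k$-separated subset; vertex set $V=\bigsqcup_{k\ge k_0}V_k$ (disjoint union) with level $\ell(v)=k$ for $v\in V_k$, open ball $B(v)=\{z:d(z,v)<2r^k\}$, closure $\overline B(v)$; edges join equal-level vertices with $\overline B(v)\cap\overline B(v')\ne\emptyset$ (horizontal) and vertices on adjacent levels whose higher-level ball is contained in the lower-level ball (radial); $|vv'|$ is the path metric with unit edges; the unique vertex of $V_{k_0}$ is the root. Colored-tree setting: assume $\operatorname{cdim}Z=n<\infty$, $r<\min\{\operatorname{diam}Z,1/\operatorname{diam}Z\}$ (so $k_0\in\{0,-1\}$), and $(\mathcal U_j)_{j\ge0}$ is a sequence of open coverings of $Z$, each $\mathcal U_j=\bigcup_{c\in C}\mathcal U_j^c$ with $|C|=n+1$ and each $\mathcal U_j^c$ consisting of pairwise disjoint open sets, such that: (1) $\mathcal U_0^c=\{Z\}$ for all $c$ and $\sup_{U\in\mathcal U_j}\operatorname{diam}U<r^j$ for $j\ge1$; (2) for every $v\in V_{j+1}$, $j\ge0$, some $U\in\mathcal U_j$ contains $B(v)$; (3) for every $c$ and different $U\in\mathcal U_j^c$, $U'\in\mathcal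 U_{j'}^c$ with $j'\le j$, the set $B(U)=\bigcup\{B(v):v\in V_{j+1},B(v)\cap U\ne\emptyset\}$ satisfies $B(U)\subset U'$ or $B(U)\cap U'=\emptyset$. For $c\in C$, $T_c$ is the tree with vertex set $\bigsqcup_{j\ge0}\mathcal U_j^c$ (an element of $\mathcal U_j^c$ is a vertex of level $j$; the element $Z\in\mathcal U_0^c$ is the root $v_c$); a vertex $U'$ of level $j'$ is an ancestor of a vertex $U$ of level $j$ if $j'<j$ and $U\subset U'$; $U$ and $U'$ are joined by an edge iff one is an ancestor of the other and its level is maximal among the levels of ancestors of the other. $\mathcal L$ is the path metric on $T_c$ with unit edges; $T_{c,i}=\mathcal U_i^c$. The map $f_c:V\to T_c$ sends the root of $X$ to $v_c$ and $v\in V_j$, $j>k_0$, to the element $U\in\mathcal U_{j'}^c$ with $B(v)\subset U$ and $j'\le\max\{j-1,0\}$ maximal with this property (well-defined by (3)). *)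

theory Defs
  imports "HOL-Analysis.Analysis"
begin

definition cdim_le :: "'a::metric_space set \<Rightarrow> nat \<Rightarrow> bool" where
  "cdim_le Z n \<longleftrightarrow> (\<exists>\<tau>>0. \<exists>\<delta>0>0. \<forall>\<delta>. 0 < \<delta> \<and> \<delta> < \<delta>0 \<longrightarrow>
     (\<exists>\<U>. (\<forall>U\<in>\<U>. openin (top_of_set Z) U) \<and> \<Union>\<U> = Z
        \<and> (\<forall>U\<in>\<U>. diameter U \<le> \<delta>)
        \<and> (\<forall>x\<in>Z. finite {U\<in>\<U>. x \<in> U} \<and> card {U\<in>\<U>. x \<in> U} \<le> n + 1)
        \<and> (\<forall>x\<in>Z. \<forall>s. s < \<tau> * \<delta> \<longrightarrow> (\<exists>U\<in>\<U>. ball x s \<inter> Z \<subseteq> U))))"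

definition has_cdim :: "'a::metric_space set \<Rightarrow> nat \<Rightarrow> bool" where
  "has_cdim Z n \<longleftrightarrow> cdim_le Z n \<and> (\<forall>m<n. \<not> cdim_le Z m)"

definition separated :: "real \<Rightarrow> 'a::metric_space set \<Rightarrow> bool" where
  "separated s A \<longleftrightarrow> (\<forall>x\<in>A. \<forall>y\<in>A. x \<noteq> y \<longrightarrow> s \<le> dist x y)"

definition maximal_separated :: "'a::metric_space set \<Rightarrow> real \<Rightarrow> 'a set \<Rightarrow> bool" where
  "maximal_separated Z s A \<longleftrightarrow> A \<subseteq> Z \<and> separated s A \<and>
     (\<forall>B. A \<subseteq> B \<and> B \<subseteq> Z \<and> separated s B \<longrightarrow> B = A)"

definition hyp_k0 :: "'a::metric_space set \<Rightarrow> real \<Rightarrow> int" where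
  "hyp_k0 Z r = (GREATEST k::int. diameter Z < r powi k)"

definition hball :: "'a::metric_space set \<Rightarrow> real \<Rightarrow> int \<Rightarrow> 'a \<Rightarrow> 'a set" where
  "hball Z r k v = {z\<in>Z. dist z v < 2 * r powi k}"

definition hyp_vertices :: "'a::metric_space set \<Rightarrow> real \<Rightarrow> (int \<Rightarrow> 'a set) \<Rightarrow> (int \<times> 'a) set" where
  "hyp_vertices Z r V = {(k, v). hyp_k0 Z r \<le> k \<and> v \<in> V k}"

definition hyp_adj :: "'a::metric_space set \<Rightarrow> real \<Rightarrow> (int \<Rightarrow> 'a set) \<Rightarrow> int \<times> 'a \<Rightarrow> int \<times> 'a \<Rightarrow> bool" where
  "hyp_adj Z r V x y \<longleftrightarrow> x \<in> hyp_vertices Z r V \<and> y \<in> hyp_vertices Z r V \<and> x \<noteq> y \<and>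
     ((fst x = fst y \<and> Z \<inter> closure (hball Z r (fst x) (snd x)) \<inter> closure (hball Z r (fst y) (snd y)) \<noteq> {})
      \<or> (fst y = fst x + 1 \<and> hball Z r (fst y) (snd y) \<subseteq> hball Z r (fst x) (snd x))
      \<or> (fst x = fst y + 1 \<and> hball Z r (fst x) (snd x) \<subseteq> hball Z r (fst y) (snd y)))"

definition graph_dist :: "('b \<Rightarrow> 'b \<Rightarrow> bool) \<Rightarrow> 'b \<Rightarrow> 'b \<Rightarrow> nat" where
  "graph_dist adj x y = (LEAST n. (adj ^^ n) x y)"

definition tree_vertices :: "(nat \<Rightarrow> 'c \<Rightarrow> 'a set set) \<Rightarrow> 'c \<Rightarrow> (nat \<times> 'a set) set" where
  "tree_vertices \<U> c = {(j, U). U \<in> \<U> j c}"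

definition tree_ancestor :: "(nat \<Rightarrow> 'c \<Rightarrow> 'a set set) \<Rightarrow> 'c \<Rightarrow> nat \<times> 'a set \<Rightarrow> nat \<times> 'a set \<Rightarrow> bool" where
  "tree_ancestor \<U> c a b \<longleftrightarrow> a \<in> tree_vertices \<U> c \<and> b \<in> tree_vertices \<U> c \<and>
     fst a < fst b \<and> snd b \<subseteq> snd a"

definition tree_adj :: "(nat \<Rightarrow> 'c \<Rightarrow> 'a set set) \<Rightarrow> 'c \<Rightarrow> nat \<times> 'a set \<Rightarrow> nat \<times> 'a set \<Rightarrow> bool" where
  "tree_adj \<U> c a b \<longleftrightarrow>
     (tree_ancestor \<U> c a b \<and> (\<forall>a'. tree_ancestor \<U> c a' b \<longrightarrow> fst a' \<le> fst a)) \<or>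
     (tree_ancestor \<U> c b a \<and> (\<forall>b'. tree_ancestor \<U> c b' a \<longrightarrow> fst b' \<le> fst b))"

definition bigB :: "'a::metric_space set \<Rightarrow> real \<Rightarrow> (int \<Rightarrow> 'a set) \<Rightarrow> nat \<Rightarrow> 'a set \<Rightarrow> 'a set" where
  "bigB Z r V j U = \<Union>{hball Z r (int j + 1) v | v. v \<in> V (int j + 1) \<and> hball Z r (int j + 1) v \<inter> U \<noteq> {}}"

definition fmap :: "'a::metric_space set \<Rightarrow> real \<Rightarrow> (nat \<Rightarrow> 'c \<Rightarrow> 'a set set) \<Rightarrow> 'c \<Rightarrow> int \<times> 'a \<Rightarrow> nat \<times> 'a set" where
  "fmap Z r \<U> c x =
     (if fst x = hyp_k0 Z r then (0, Z)
      else (let j' = (GREATEST j'::nat. int j' \<le> max (fst x - 1) 0 \<and>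
                        (\<exists>U\<in>\<U> j' c. hball Z r (fst x) (snd x) \<subseteq> U))
            in (j', THE U. U \<in> \<U> j' c \<and> hball Z r (fst x) (snd x) \<subseteq> U)))"

end

theory Submission
  imports Defs
begin


locale setting =
  fixes Z :: "'a::metric_space set" and r :: real and V :: "int \<Rightarrow> 'a set"
    and \<U> :: "nat \<Rightarrow> 'c \<Rightarrow> 'a set set" and c :: 'c
  assumes bdd: "bounded Z"
    and two: "\<exists>x\<in>Z. \<exists>y\<in>Z. x \<noteq> y"
    and r_pos: "0 < r" and r_le: "r \<le> 1/6"
    and V_max: "\<And>k. hyp_k0 Z r \<le> k \<Longrightarrow> maximal_separated Z (r powi k) (V k)"
    and r_small: "r < min (diameter Z) (1 / diameter Z)"
    and U_sub: "\<And>j U. U \<in> \<U> j c \<Longrightarrow> U \<subseteq> Z"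
    and U_disj: "\<And>j. pairwise disjnt (\<U> j c)"
    and U_0: "\<U> 0 c = {Z}"
    and U_nest: "\<And>j j' U U'. U \<in> \<U> j c \<Longrightarrow> U' \<in> \<U> j' c \<Longrightarrow> j' \<le> j \<Longrightarrow>
                   (j, U) \<noteq> (j', U') \<Longrightarrow> bigB Z r V j U \<subseteq> U' \<or> bigB Z r V j U \<inter> U' = {}"
begin

abbreviation "HB \<equiv> hball Z r"
abbreviation "BB \<equiv> bigB Z r V"
abbreviation "VX \<equiv> hyp_vertices Z r V"
abbreviation "k0 \<equiv> hyp_k0 Z r"
abbreviation "F \<equiv> fmap Z r \<U> c"
abbreviation "TA \<equiv> tree_adj \<U> c"
abbreviation "TAnc \<equiv> tree_ancestor \<U> c"

lemma rp_pos: "0 < r powi k"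
  using r_pos by simp

lemma rp_succ: "r powi (k+1) = r * r powi k"
  using r_pos by (simp add: power_int_add_1)

lemma rp_mono: "m \<le> k \<Longrightarrow> r powi k \<le> r powi m"
  using r_pos r_le by (intro power_int_decreasing) auto

lemma k0_props: "k0 \<le> 0 \<and> diameter Z < r powi k0"
proof -
  define d where "d = diameter Z"
  have rd: "r < d" "r < 1/d" using r_small by (auto simp: d_def)
  have dpos: "0 < d" using rd r_pos by linarith
  have rd1: "r * d < 1" using rd(2) dpos by (simp add: field_simps)
  show ?thesis
  proof (cases "d < 1")
    case True
    have "k0 = 0" unfolding hyp_k0_def d_def[symmetric]
    proof (rule Greatest_equality)
      show "d < r powi 0" using True by simp
      fix y :: int assume "d < r powi y"
      moreover have "1 \<le> y \<Longrightarrow> r powi y \<le> r powi 1" by (rule rp_mono)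
      ultimately show "y \<le> 0" using rd by fastforce
    qed
    thus ?thesis using True by (simp add: d_def)
  next
    case False
    have inv: "r powi (-1) = 1 / r" by (simp add: power_int_minus divide_inverse)
    have "d < 1/r" using rd1 r_pos by (simp add: field_simps)
    have "k0 = -1" unfolding hyp_k0_def d_def[symmetric]
    proof (rule Greatest_equality)
      show "d < r powi (-1)" using inv \<open>d < 1/r\<close> by simp
      fix y :: int assume "d < r powi y"
      moreover have "0 \<le> y \<Longrightarrow> r powi y \<le> r powi 0" by (rule rp_mono)
      ultimately show "y \<le> -1" using False by fastforce
    qed
    thus ?thesis using inv \<open>d < 1/r\<close> by (simp add: d_def)
  qed
qed

lemma V_sub: "k0 \<le> k \<Longrightarrow> V k \<subseteq> Z"
  using V_max unfolding maximal_separated_def by blast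

lemma GEO1:
  assumes "k0 \<le> k" "z \<in> Z"
  shows "\<exists>u\<in>V k. dist z u < r powi k"
proof (rule ccontr)
  assume "\<not> ?thesis"
  hence far: "\<forall>u\<in>V k. r powi k \<le> dist z u" by force
  have ms: "maximal_separated Z (r powi k) (V k)" using V_max assms by blast
  have "separated (r powi k) (insert z (V k))"
    using ms far unfolding maximal_separated_def separated_def
    by (auto simp: dist_commute)
  moreover have "insert z (V k) \<subseteq> Z" using ms assms unfolding maximal_separated_def by auto
  ultimately have "insert z (V k) = V k" using ms unfolding maximal_separated_def by blast
  hence "z \<in> V k" by blast
  thus False using far rp_pos[of k] by force
qed

lemma k0_le_lvl: "k0 \<le> int j + 1"
  using k0_props by linarith

lemma GEO2:
  assumes "U \<subseteq> Z" "p \<in> U" "q \<in> Z" "dist p q < r powi (int j + 1)"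
  shows "q \<in> BB j U"
proof -
  obtain u where u: "u \<in> V (int j + 1)" "dist p u < r powi (int j + 1)"
    using GEO1[OF k0_le_lvl, of p] assms by blast
  have "dist q u \<le> dist p q + dist p u" by (metis dist_commute dist_triangle)
  hence "dist q u < 2 * r powi (int j + 1)" using u assms by linarith
  hence q: "q \<in> HB (int j + 1) u" using assms by (simp add: hball_def)
  have "dist p u < 2 * r powi (int j + 1)" using u rp_pos[of "int j + 1"] by linarith
  hence "p \<in> HB (int j + 1) u" using assms by (auto simp: hball_def)
  hence "HB (int j + 1) u \<inter> U \<noteq> {}" using assms by blast
  thus ?thesis using u q unfolding bigB_def by blast
qed

lemma GEO3:
  assumes "u \<in> V (int j + 1)" "HB (int j + 1) u \<inter> U \<noteq> {}"
  shows "HB (int j + 1) u \<subseteq> BB j U"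
  using assms unfolding bigB_def by blast

lemma sub_BB: "U \<subseteq> Z \<Longrightarrow> U \<subseteq> BB j U"
  using GEO2[of U _ _ j] rp_pos by fastforce

lemma NEST:
  assumes "U \<in> \<U> j c" "U' \<in> \<U> j' c" "j' \<le> j" "(j, U) \<noteq> (j', U')" "BB j U \<inter> U' \<noteq> {}"
  shows "BB j U \<subseteq> U'"
  using U_nest[OF assms(1-4)] assms(5) by blast

lemma NEST_lt:
  assumes "U \<in> \<U> j c" "U' \<in> \<U> j' c" "j' \<le> j" "(j, U) \<noteq> (j', U')" "BB j U \<inter> U' \<noteq> {}"
    "U \<noteq> {}"
  shows "j' < j"
proof (rule ccontr)
  assume "\<not> j' < j"
  hence jj: "j' = j" using assms by simp
  hence "U \<noteq> U'" using assms by simp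
  hence "disjnt U U'" using U_disj[of j] assms jj unfolding pairwise_def by blast
  moreover have "U \<subseteq> U'" using NEST[OF assms(1-5)] sub_BB[OF U_sub[OF assms(1)]] by blast
  ultimately show False using assms(6) by (auto simp: disjnt_def)
qed

lemma INT:
  assumes "U \<in> \<U> j c" "U' \<in> \<U> j' c" "j' \<le> j" "U \<inter> U' \<noteq> {}"
  shows "(j = j' \<and> U = U') \<or> (j' < j \<and> U \<subseteq> U')"
proof (cases "(j, U) = (j', U')")
  case False
  have s: "U \<subseteq> BB j U" using sub_BB[OF U_sub[OF assms(1)]] .
  hence "BB j U \<inter> U' \<noteq> {}" using assms by blast
  from NEST[OF assms(1-3) False this] NEST_lt[OF assms(1-3) False this] s assms(4)
  show ?thesis by blast
qed auto

end


context setting begin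

definition imgP :: "int \<times> 'a \<Rightarrow> nat \<Rightarrow> 'a set \<Rightarrow> bool" where
  "imgP x a X \<longleftrightarrow> int a \<le> max (fst x - 1) 0 \<and> X \<in> \<U> a c \<and> HB (fst x) (snd x) \<subseteq> X \<and>
     (\<forall>j' U'. int j' \<le> max (fst x - 1) 0 \<longrightarrow> U' \<in> \<U> j' c \<longrightarrow> HB (fst x) (snd x) \<subseteq> U' \<longrightarrow> j' \<le> a)"

lemma in_HB: "(k, v) \<in> VX \<Longrightarrow> v \<in> HB k v"
  using V_sub[of k] rp_pos[of k] by (auto simp: hyp_vertices_def hball_def)

lemma fmap_img:
  assumes x: "x \<in> VX"
  shows "imgP x (fst (F x)) (snd (F x))"
proof -
  obtain k v where kv: "x = (k, v)" by (cases x)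
  have kk: "k0 \<le> k" using x kv by (simp add: hyp_vertices_def)
  define Q where "Q = (\<lambda>j'::nat. int j' \<le> max (k - 1) 0 \<and> (\<exists>U\<in>\<U> j' c. HB k v \<subseteq> U))"
  have Q0: "Q 0" using U_0 by (auto simp: Q_def hball_def)
  have Qb: "Q y \<Longrightarrow> y \<le> nat (max (k - 1) 0)" for y by (auto simp: Q_def)
  define a where "a = (GREATEST j'. Q j')"
  have Qa: "Q a" unfolding a_def using Q0 Qb by (rule GreatestI_nat)
  have amax: "Q y \<Longrightarrow> y \<le> a" for y unfolding a_def using Qb by (metis Greatest_le_nat)
  obtain X where X: "X \<in> \<U> a c" "HB k v \<subseteq> X" using Qa by (auto simp: Q_def)
  have vin: "v \<in> HB k v" using in_HB x kv by blast
  have the: "(THE U. U \<in> \<U> a c \<and> HB k v \<subseteq> U) = X"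
  proof (rule the_equality)
    show "X \<in> \<U> a c \<and> HB k v \<subseteq> X" using X by blast
    fix U assume U: "U \<in> \<U> a c \<and> HB k v \<subseteq> U"
    show "U = X"
    proof (rule ccontr)
      assume "U \<noteq> X"
      hence "disjnt U X" using U_disj[of a] U X unfolding pairwise_def by blast
      thus False using U X vin by (auto simp: disjnt_def)
    qed
  qed
  show ?thesis
  proof (cases "k = k0")
    case True
    hence F: "F x = (0, Z)" using kv by (simp add: fmap_def)
    have "max (k - 1) 0 = 0" using True k0_props by linarith
    thus ?thesis using F kv U_0 by (auto simp: imgP_def hball_def)
  next
    case False
    hence F: "F x = (a, X)" using kv the by (simp add: fmap_def Let_def a_def Q_def)
    show ?thesis using F kv Qa X amax by (auto simp: imgP_def Q_def)
  qed
qed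

lemma fmap_imgE:
  assumes "x \<in> VX"
  obtains a X where "F x = (a, X)" "imgP x a X"
  using fmap_img[OF assms] by (metis prod.collapse)

definition near2 :: "nat \<times> 'a set \<Rightarrow> nat \<times> 'a set \<Rightarrow> bool" where
  "near2 P Q \<longleftrightarrow> P = Q \<or> TA P Q \<or> (\<exists>W. TA P W \<and> TA W Q)"

lemma TA_sym: "TA P Q \<Longrightarrow> TA Q P"
  unfolding tree_adj_def by blast

lemma near2_sym: "near2 P Q \<Longrightarrow> near2 Q P"
  unfolding near2_def using TA_sym by blast

lemma near2_pow: "near2 P Q \<Longrightarrow> \<exists>m\<le>2. (TA ^^ m) P Q"
  unfolding near2_def
proof (elim disjE exE conjE)
  assume "P = Q" thus ?thesis by (intro exI[of _ 0]) auto
next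
  assume "TA P Q" thus ?thesis by (intro exI[of _ 1]) auto
next
  fix W assume "TA P W" "TA W Q"
  hence "(TA ^^ Suc (Suc 0)) P Q" by (metis relpowp_Suc_I2 relpowp_Suc_0)
  thus ?thesis by (intro exI[of _ 2]) (auto simp: numeral_2_eq_2)
qed

lemma TAnc_iff: "TAnc (m, W) (b, Y) \<longleftrightarrow> W \<in> \<U> m c \<and> Y \<in> \<U> b c \<and> m < b \<and> Y \<subseteq> W"
  by (simp add: tree_ancestor_def tree_vertices_def)

lemma CL:
  assumes X: "X \<in> \<U> a c" and Y: "Y \<in> \<U> b c" "Y \<noteq> {}"
    and rel: "(a = b \<and> X = Y) \<or> (a < b \<and> Y \<subseteq> X)"
    and H: "\<And>m1 W1 m2 W2. TAnc (m1, W1) (b, Y) \<Longrightarrow> TAnc (m2, W2) (b, Y) \<Longrightarrow> a < m1 \<Longrightarrow> m1 < m2 \<Longrightarrow> False"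
  shows "near2 (a, X) (b, Y)"
proof (cases "a = b \<and> X = Y")
  case True thus ?thesis by (simp add: near2_def)
next
  case False
  hence ab: "a < b" "Y \<subseteq> X" using rel by auto
  show ?thesis
  proof (cases "\<exists>m W. TAnc (m, W) (b, Y) \<and> a < m")
    case True
    then obtain m W where mW: "TAnc (m, W) (b, Y)" "a < m" by blast
    have W: "W \<in> \<U> m c" "m < b" "Y \<subseteq> W" using mW by (auto simp: TAnc_iff)
    have t1: "TA (m, W) (b, Y)"
      unfolding tree_adj_def
    proof (intro disjI1 conjI allI impI)
      show "TAnc (m, W) (b, Y)" by fact
      fix a' assume "TAnc a' (b, Y)"
      thus "fst a' \<le> fst (m, W)" using H[OF mW(1), of "fst a'" "snd a'"] mW(2)
        by (metis fst_conv not_le_imp_less prod.collapse)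
    qed
    have "W \<inter> X \<noteq> {}" using W ab Y by blast
    hence WX: "W \<subseteq> X" using INT[OF W(1) X] mW(2) by auto
    have t2: "TA (a, X) (m, W)"
      unfolding tree_adj_def
    proof (intro disjI1 conjI allI impI)
      show "TAnc (a, X) (m, W)" using WX X W mW by (simp add: TAnc_iff)
      fix a' assume a': "TAnc a' (m, W)"
      obtain m' W' where [simp]: "a' = (m', W')" by (cases a')
      have "TAnc (m', W') (b, Y)" using a' W Y by (auto simp: TAnc_iff)
      moreover have "m' < m" using a' by (simp add: TAnc_iff)
      ultimately show "fst a' \<le> fst (a, X)" using H[of m' W' m W] mW by fastforce
    qed
    show ?thesis using t1 t2 unfolding near2_def by blast
  next
    case False
    have "TA (a, X) (b, Y)"
      unfolding tree_adj_def
    proof (intro disjI1 conjI allI impI)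
      show "TAnc (a, X) (b, Y)" using X Y ab by (simp add: TAnc_iff)
      fix a' assume "TAnc a' (b, Y)"
      thus "fst a' \<le> fst (a, X)" using False by (metis fst_conv not_le_imp_less prod.collapse)
    qed
    thus ?thesis unfolding near2_def by blast
  qed
qed

end


context setting begin

lemma radial:
  assumes x: "(k, v) \<in> VX" and y: "(k + 1, w) \<in> VX" and sub: "HB (k + 1) w \<subseteq> HB k v"
  shows "near2 (F (k, v)) (F (k + 1, w))"
proof -
  obtain a X where fx: "F (k, v) = (a, X)" "imgP (k, v) a X" using fmap_imgE[OF x] by blast
  obtain b Y where fy: "F (k + 1, w) = (b, Y)" "imgP (k + 1, w) b Y" using fmap_imgE[OF y] by blast
  have X: "X \<in> \<U> a c" "HB k v \<subseteq> X" "int a \<le> max (k - 1) 0"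
    and amax: "\<And>j' U'. int j' \<le> max (k - 1) 0 \<Longrightarrow> U' \<in> \<U> j' c \<Longrightarrow> HB k v \<subseteq> U' \<Longrightarrow> j' \<le> a"
    using fx(2) by (auto simp: imgP_def)
  have Y: "Y \<in> \<U> b c" "HB (k+1) w \<subseteq> Y" "int b \<le> max k 0"
    and bmax: "\<And>j' U'. int j' \<le> max k 0 \<Longrightarrow> U' \<in> \<U> j' c \<Longrightarrow> HB (k+1) w \<subseteq> U' \<Longrightarrow> j' \<le> b"
    using fy(2) by (auto simp: imgP_def)
  have win: "w \<in> HB (k+1) w" using in_HB[OF y] .
  have ab: "a \<le> b"
  proof (rule bmax[OF _ X(1)])
    show "int a \<le> max k 0" using X(3) by linarith
    show "HB (k+1) w \<subseteq> X" using X(2) sub by blast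
  qed
  have wv: "dist w v < 2 * r powi k" using win sub by (auto simp: hball_def)
  have "Y \<inter> X \<noteq> {}" using win sub X Y by blast
  hence rel: "(a = b \<and> X = Y) \<or> (a < b \<and> Y \<subseteq> X)" using INT[OF Y(1) X(1) ab] by auto
  have "near2 (a, X) (b, Y)"
  proof (rule CL[OF X(1) Y(1) _ rel])
    show "Y \<noteq> {}" using win Y by blast
    fix m1 W1 m2 W2
    assume A1: "TAnc (m1, W1) (b, Y)" and A2: "TAnc (m2, W2) (b, Y)" and lt: "a < m1" "m1 < m2"
    have W1: "W1 \<in> \<U> m1 c" "Y \<subseteq> W1" using A1 by (auto simp: TAnc_iff)
    have W2: "W2 \<in> \<U> m2 c" "Y \<subseteq> W2" "m2 < b" using A2 by (auto simp: TAnc_iff)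
    have m2k: "int m2 \<le> k - 1" using W2(3) Y(3) lt by linarith
    have "HB k v \<subseteq> BB m2 W2"
    proof (cases "int m2 = k - 1")
      case True
      hence kk: "k = int m2 + 1" by simp
      have "v \<in> V (int m2 + 1)" using x kk by (simp add: hyp_vertices_def)
      moreover have "HB (int m2 + 1) v \<inter> W2 \<noteq> {}" using win sub W2 Y kk by blast
      ultimately show ?thesis using GEO3 kk by blast
    next
      case False
      hence m2k': "int m2 + 2 \<le> k" using m2k by linarith
      show ?thesis
      proof
        fix q assume q: "q \<in> HB k v"
        have qv: "dist v q < 2 * r powi k" "q \<in> Z" using q by (auto simp: hball_def dist_commute)
        have "dist w q \<le> dist w v + dist v q" by (rule dist_triangle)
        also have "\<dots> < 4 * r powi k" using wv qv by linarith
        also have "\<dots> \<le> 4 * r powi (int m2 + 2)" using rp_mono[OF m2k'] by simp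
        also have "\<dots> = 4 * r * r powi (int m2 + 1)"
          using rp_succ[of "int m2 + 1"] by (simp add: add.assoc)
        also have "\<dots> \<le> r powi (int m2 + 1)"
          using r_le r_pos rp_pos[of "int m2 + 1"] by (intro mult_left_le_one_le) auto
        finally have "dist w q < r powi (int m2 + 1)" .
        thus "q \<in> BB m2 W2" using GEO2[OF U_sub[OF W2(1)] _ qv(2)] win W2 Y by blast
      qed
    qed
    moreover have "BB m2 W2 \<inter> W1 \<noteq> {}"
      using sub_BB[OF U_sub[OF W2(1)], of m2] W1 W2 win Y by blast
    ultimately have "HB k v \<subseteq> W1" using NEST[OF W2(1) W1(1)] lt by force
    hence "m1 \<le> a" using amax[OF _ W1(1)] m2k lt by linarith
    thus False using lt by simp
  qed
  thus ?thesis using fx fy by simp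
qed

end


context setting begin

lemma closure_HB_dist: "p \<in> closure (HB k v) \<Longrightarrow> dist v p \<le> 2 * r powi k"
proof -
  assume p: "p \<in> closure (HB k v)"
  have "HB k v \<subseteq> cball v (2 * r powi k)" by (auto simp: hball_def dist_commute)
  hence "closure (HB k v) \<subseteq> cball v (2 * r powi k)" by (intro closure_minimal) auto
  thus ?thesis using p by auto
qed

lemma HA:
  assumes x: "(k, v) \<in> VX" and p0: "p0 \<in> closure (HB k v)" "p0 \<in> closure (HB k w)"
    and W: "W \<in> \<U> m c" "w \<in> W" and mk: "int m \<le> k - 2"
  shows "HB k v \<subseteq> BB m W"
proof
  have dvw: "dist w v \<le> 4 * r powi k"
    using closure_HB_dist[OF p0(1)] closure_HB_dist[OF p0(2)] dist_triangle[of w v p0]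
    by (simp add: dist_commute)
  fix q assume q: "q \<in> HB k v"
  have qv: "dist v q < 2 * r powi k" "q \<in> Z" using q by (auto simp: hball_def dist_commute)
  have m2k': "int m + 2 \<le> k" using mk by linarith
  have "dist w q \<le> dist w v + dist v q" by (rule dist_triangle)
  also have "\<dots> < 6 * r powi k" using dvw qv by linarith
  also have "\<dots> \<le> 6 * r powi (int m + 2)" using rp_mono[OF m2k'] by simp
  also have "\<dots> = 6 * r * r powi (int m + 1)"
    using rp_succ[of "int m + 1"] by (simp add: add.assoc)
  also have "\<dots> \<le> r powi (int m + 1)"
    using r_le r_pos rp_pos[of "int m + 1"] by (intro mult_left_le_one_le) auto
  finally have "dist w q < r powi (int m + 1)" .
  thus "q \<in> BB m W" using GEO2[OF U_sub[OF W(1)] W(2) qv(2)] by blast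
qed

lemma HB':
  assumes x: "(k, v) \<in> VX" and p0: "p0 \<in> Z" "p0 \<in> closure (HB k v)" "p0 \<in> closure (HB k w)"
    and W: "W \<in> \<U> m c" "HB k w \<subseteq> W" and mk: "int m = k - 1"
  shows "BB m W \<inter> HB k v \<noteq> {}"
proof -
  have kk: "k0 \<le> k" using x by (simp add: hyp_vertices_def)
  obtain u where u: "u \<in> V k" "dist p0 u < r powi k" using GEO1[OF kk p0(1)] by blast
  obtain p where p: "p \<in> HB k w" "dist p p0 < r powi k"
    using p0(3) rp_pos[of k] unfolding closure_approachable by blast
  obtain p' where p': "p' \<in> HB k v" "dist p' p0 < r powi k"
    using p0(2) rp_pos[of k] unfolding closure_approachable by blast
  have "dist p u \<le> dist p p0 + dist p0 u" by (rule dist_triangle)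
  hence "p \<in> HB k u" using p u by (auto simp: hball_def)
  moreover have "dist p' u \<le> dist p' p0 + dist p0 u" by (rule dist_triangle)
  hence "p' \<in> HB k u" using p' u by (auto simp: hball_def)
  moreover have kk': "k = int m + 1" using mk by simp
  ultimately have "HB (int m + 1) u \<subseteq> BB m W" using GEO3[of u m W] u W p by auto
  thus ?thesis using \<open>p' \<in> HB k u\<close> p' kk' by blast
qed

lemma HC:
  assumes x: "(k, v) \<in> VX" "(k, w) \<in> VX" and p0: "p0 \<in> Z" "p0 \<in> closure (HB k v)" "p0 \<in> closure (HB k w)"
    and W: "W \<in> \<U> m c" "HB k w \<subseteq> W" and mk: "int m \<le> k - 1"
  shows "BB m W \<inter> HB k v \<noteq> {}"
proof (cases "int m = k - 1")
  case True thus ?thesis using HB'[OF x(1) p0 W] by blast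
next
  case False
  have "HB k v \<subseteq> BB m W" using HA[OF x(1) p0(2,3) W(1)] W(2) in_HB[OF x(2)] False mk by force
  thus ?thesis using in_HB[OF x(1)] by blast
qed

lemma horiz_ord:
  assumes x: "(k, v) \<in> VX" "(k, w) \<in> VX" and p0: "p0 \<in> Z" "p0 \<in> closure (HB k v)" "p0 \<in> closure (HB k w)"
    and k2: "2 \<le> k"
    and fx: "imgP (k, v) a X" and fy: "imgP (k, w) b Y" and ab: "a \<le> b"
  shows "near2 (a, X) (b, Y)"
proof -
  have X: "X \<in> \<U> a c" "HB k v \<subseteq> X" "int a \<le> k - 1"
    and amax: "\<And>j' U'. int j' \<le> k - 1 \<Longrightarrow> U' \<in> \<U> j' c \<Longrightarrow> HB k v \<subseteq> U' \<Longrightarrow> j' \<le> a"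
    using fx k2 by (auto simp: imgP_def)
  have Y: "Y \<in> \<U> b c" "HB k w \<subseteq> Y" "int b \<le> k - 1"
    using fy k2 by (auto simp: imgP_def)
  have vin: "v \<in> X" using in_HB[OF x(1)] X by blast
  have win: "w \<in> Y" using in_HB[OF x(2)] Y by blast
  show ?thesis
  proof (cases "Y \<inter> X = {}")
    case False
    hence rel: "(a = b \<and> X = Y) \<or> (a < b \<and> Y \<subseteq> X)" using INT[OF Y(1) X(1) ab] by auto
    show ?thesis
    proof (rule CL[OF X(1) Y(1) _ rel])
      show "Y \<noteq> {}" using win by blast
      fix m1 W1 m2 W2
      assume A1: "TAnc (m1, W1) (b, Y)" and A2: "TAnc (m2, W2) (b, Y)" and lt: "a < m1" "m1 < m2"
      have W1: "W1 \<in> \<U> m1 c" "Y \<subseteq> W1" using A1 by (auto simp: TAnc_iff)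
      have W2: "W2 \<in> \<U> m2 c" "Y \<subseteq> W2" "m2 < b" using A2 by (auto simp: TAnc_iff)
      have "HB k v \<subseteq> BB m2 W2" using HA[OF x(1) p0(2,3) W2(1)] W2 win Y(3) by force
      moreover have "BB m2 W2 \<inter> W1 \<noteq> {}"
        using sub_BB[OF U_sub[OF W2(1)], of m2] W1 W2 win by blast
      ultimately have "HB k v \<subseteq> W1" using NEST[OF W2(1) W1(1)] lt by force
      hence "m1 \<le> a" using amax[OF _ W1(1)] W2(3) Y(3) lt by linarith
      thus False using lt by simp
    qed
  next
    case True
    have b1: "0 < b"
    proof (rule ccontr)
      assume "\<not> 0 < b"
      hence "Y = Z" using Y(1) U_0 by simp
      thus False using True vin U_sub[OF X(1)] by blast
    qed
    define Qm where "Qm = (\<lambda>m. \<exists>W. TAnc (m, W) (b, Y))"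
    have Q0: "Qm 0" unfolding Qm_def using U_0 b1 U_sub[OF Y(1)] Y(1)
      by (intro exI[of _ Z]) (simp add: TAnc_iff)
    have Qb: "Qm m \<Longrightarrow> m \<le> b" for m by (auto simp: Qm_def TAnc_iff)
    define m1 where "m1 = (GREATEST m. Qm m)"
    have "Qm m1" unfolding m1_def using Q0 Qb by (rule GreatestI_nat)
    then obtain P where P: "TAnc (m1, P) (b, Y)" unfolding Qm_def by blast
    have m1max: "TAnc (m', W') (b, Y) \<Longrightarrow> m' \<le> m1" for m' W'
      unfolding m1_def using Qb by (metis Greatest_le_nat Qm_def)
    have P': "P \<in> \<U> m1 c" "Y \<subseteq> P" "m1 < b" using P by (auto simp: TAnc_iff)
    have t1: "TA (m1, P) (b, Y)"
      unfolding tree_adj_def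
    proof (intro disjI1 conjI allI impI)
      show "TAnc (m1, P) (b, Y)" by fact
      fix a' assume "TAnc a' (b, Y)"
      thus "fst a' \<le> fst (m1, P)" using m1max by (metis fst_conv prod.collapse)
    qed
    have s1: "HB k v \<subseteq> BB m1 P" using HA[OF x(1) p0(2,3) P'(1)] P' win Y(3) by force
    have m1a: "m1 < a"
    proof (rule ccontr)
      assume "\<not> m1 < a"
      hence am: "a \<le> m1" by simp
      have ne: "(m1, P) \<noteq> (a, X)" using P' True win by blast
      have "BB m1 P \<inter> X \<noteq> {}" using s1 X(2) in_HB[OF x(1)] by blast
      hence "BB m1 P \<subseteq> X" using NEST[OF P'(1) X(1) am ne] by blast
      thus False using sub_BB[OF U_sub[OF P'(1)], of m1] P' True win by blast
    qed
    have "BB a X \<inter> HB k w \<noteq> {}" using HC[OF x(2) x(1) p0(1,3,2) X(1,2,3)] .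
    hence "BB a X \<inter> P \<noteq> {}" using Y(2) P' by blast
    hence "BB a X \<subseteq> P" using NEST[OF X(1) P'(1)] m1a by force
    hence XP: "X \<subseteq> P" using sub_BB[OF U_sub[OF X(1)], of a] by blast
    have t2: "TA (a, X) (m1, P)"
      unfolding tree_adj_def
    proof (intro disjI2 conjI allI impI)
      show "TAnc (m1, P) (a, X)" using XP P' X m1a by (simp add: TAnc_iff)
      fix a' assume a': "TAnc a' (a, X)"
      obtain m' Q where [simp]: "a' = (m', Q)" by (cases a')
      have Q: "Q \<in> \<U> m' c" "X \<subseteq> Q" "m' < a" using a' by (auto simp: TAnc_iff)
      have "BB b Y \<inter> HB k v \<noteq> {}" using HC[OF x p0 Y(1,2,3)] .
      hence "BB b Y \<inter> Q \<noteq> {}" using X(2) Q by blast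
      hence "BB b Y \<subseteq> Q" using NEST[OF Y(1) Q(1)] Q(3) ab by force
      hence "Y \<subseteq> Q" using sub_BB[OF U_sub[OF Y(1)], of b] by blast
      hence "TAnc (m', Q) (b, Y)" using Q Y ab by (simp add: TAnc_iff)
      thus "fst a' \<le> fst (m1, P)" using m1max by simp
    qed
    show ?thesis using t1 t2 unfolding near2_def by blast
  qed
qed

lemma horiz:
  assumes x: "(k, v) \<in> VX" "(k, w) \<in> VX" and p0: "p0 \<in> Z" "p0 \<in> closure (HB k v)" "p0 \<in> closure (HB k w)"
  shows "near2 (F (k, v)) (F (k, w))"
proof -
  obtain a X where fx: "F (k, v) = (a, X)" "imgP (k, v) a X" using fmap_imgE[OF x(1)] by blast
  obtain b Y where fy: "F (k, w) = (b, Y)" "imgP (k, w) b Y" using fmap_imgE[OF x(2)] by blast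
  show ?thesis
  proof (cases "2 \<le> k")
    case False
    hence "max (k - 1) 0 = 0" by linarith
    hence "a = 0 \<and> X = Z" "b = 0 \<and> Y = Z" using fx(2) fy(2) U_0 by (auto simp: imgP_def)
    thus ?thesis using fx fy by (simp add: near2_def)
  next
    case True
    show ?thesis
    proof (cases "a \<le> b")
      case True
      thus ?thesis using horiz_ord[OF x p0 \<open>2 \<le> k\<close> fx(2) fy(2)] fx fy by simp
    next
      case False
      hence "near2 (b, Y) (a, X)" using horiz_ord[OF x(2,1) p0(1,3,2) \<open>2 \<le> k\<close> fy(2) fx(2)] by simp
      thus ?thesis using fx fy near2_sym by simp
    qed
  qed
qed

end


context setting begin

abbreviation "HADJ \<equiv> hyp_adj Z r V"

lemma adj_near2:
  assumes "HADJ x y" shows "near2 (F x) (F y)"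
proof -
  obtain k v where x: "x = (k, v)" by (cases x)
  obtain k' w where y: "y = (k', w)" by (cases y)
  have vx: "(k, v) \<in> VX" "(k', w) \<in> VX" using assms x y by (auto simp: hyp_adj_def)
  consider (h) "k = k'" "Z \<inter> closure (HB k v) \<inter> closure (HB k' w) \<noteq> {}"
    | (r1) "k' = k + 1" "HB k' w \<subseteq> HB k v"
    | (r2) "k = k' + 1" "HB k v \<subseteq> HB k' w"
    using assms x y unfolding hyp_adj_def by auto
  thus ?thesis
  proof cases
    case h
    then obtain p0 where "p0 \<in> Z" "p0 \<in> closure (HB k v)" "p0 \<in> closure (HB k w)" by blast
    thus ?thesis using horiz[of k v w p0] vx h x y by simp
  next
    case r1 thus ?thesis using radial[of k v w] vx x y by simp
  next
    case r2 thus ?thesis using radial[of k' w v] vx x y near2_sym by simp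
  qed
qed

lemma V0_unique: "v \<in> V k0 \<Longrightarrow> w \<in> V k0 \<Longrightarrow> v = w"
proof (rule ccontr)
  assume v: "v \<in> V k0" and w: "w \<in> V k0" and ne: "v \<noteq> w"
  have ms: "maximal_separated Z (r powi k0) (V k0)" using V_max by blast
  hence "r powi k0 \<le> dist v w" using v w ne unfolding maximal_separated_def separated_def by blast
  moreover have "dist v w \<le> diameter Z"
    using diameter_bounded_bound[OF bdd] V_sub[of k0] v w by blast
  ultimately show False using k0_props by linarith
qed

lemma V0_ne: "\<exists>v. v \<in> V k0"
  using two GEO1[of k0] by blast

definition "hv0 = (SOME v. v \<in> V k0)"
definition "hroot = (k0, hv0)"

lemma hv0_in: "hv0 \<in> V k0"
  unfolding hv0_def using V0_ne by (rule someI_ex)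

lemma conn:
  assumes "k0 \<le> k"
  shows "\<forall>v\<in>V k. \<exists>n. (HADJ ^^ n) (k, v) hroot \<and> (HADJ ^^ n) hroot (k, v)"
  using assms
proof (induction k rule: int_ge_induct)
  case base
  show ?case
  proof
    fix v assume "v \<in> V k0"
    hence "v = hv0" using V0_unique hv0_in by blast
    thus "\<exists>n. (HADJ ^^ n) (k0, v) hroot \<and> (HADJ ^^ n) hroot (k0, v)"
      by (intro exI[of _ 0]) (simp add: hroot_def)
  qed
next
  case (step i)
  show ?case
  proof
    fix v assume v: "v \<in> V (i + 1)"
    have vZ: "v \<in> Z" using V_sub[of "i+1"] step v by auto
    obtain u where u: "u \<in> V i" "dist v u < r powi i" using GEO1[OF step(1) vZ] by blast
    obtain n where n: "(HADJ ^^ n) (i, u) hroot" "(HADJ ^^ n) hroot (i, u)" using step u by blast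
    have sub: "HB (i+1) v \<subseteq> HB i u"
    proof
      fix q assume q: "q \<in> HB (i+1) v"
      have "dist q u \<le> dist q v + dist v u" by (rule dist_triangle)
      also have "\<dots> < 2 * (r * r powi i) + r powi i" using q u rp_succ[of i] by (auto simp: hball_def)
      also have "\<dots> \<le> 2 * r powi i" using r_le rp_pos[of i] by (simp add: field_simps)
      finally show "q \<in> HB i u" using q by (auto simp: hball_def)
    qed
    have vx: "(i, u) \<in> VX" "(i+1, v) \<in> VX" using step u v by (auto simp: hyp_vertices_def)
    have a1: "HADJ (i, u) (i+1, v)" using vx sub by (auto simp: hyp_adj_def)
    have a2: "HADJ (i+1, v) (i, u)" using vx sub by (auto simp: hyp_adj_def)
    have "(HADJ ^^ Suc n) (i+1, v) hroot" using a2 n(1) by (rule relpowp_Suc_I2)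
    moreover have "(HADJ ^^ Suc n) hroot (i+1, v)" using n(2) a1 by (rule relpowp_Suc_I)
    ultimately show "\<exists>n. (HADJ ^^ n) (i+1, v) hroot \<and> (HADJ ^^ n) hroot (i+1, v)" by blast
  qed
qed

lemma connected: "x \<in> VX \<Longrightarrow> y \<in> VX \<Longrightarrow> \<exists>n. (HADJ ^^ n) x y"
proof -
  assume x: "x \<in> VX" and y: "y \<in> VX"
  obtain n1 where "(HADJ ^^ n1) x hroot" using conn x by (force simp: hyp_vertices_def)
  moreover obtain n2 where "(HADJ ^^ n2) hroot y" using conn y by (force simp: hyp_vertices_def)
  ultimately have "(HADJ ^^ (n1 + n2)) x y" by (auto simp: relpowp_add)
  thus ?thesis by blast
qed

lemma path_bound: "(HADJ ^^ n) x y \<Longrightarrow> \<exists>m\<le>2*n. (TA ^^ m) (F x) (F y)"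
proof (induction n arbitrary: y)
  case 0 thus ?case by (intro exI[of _ 0]) auto
next
  case (Suc n)
  then obtain z where z: "(HADJ ^^ n) x z" "HADJ z y" by (auto elim: relpowp_Suc_E)
  obtain m where m: "m \<le> 2*n" "(TA ^^ m) (F x) (F z)" using Suc.IH[OF z(1)] by blast
  obtain m' where m': "m' \<le> 2" "(TA ^^ m') (F z) (F y)" using near2_pow[OF adj_near2[OF z(2)]] by blast
  have "(TA ^^ (m + m')) (F x) (F y)" using m m' by (auto simp: relpowp_add)
  moreover have "m + m' \<le> 2 * Suc n" using m m' by simp
  ultimately show ?case by blast
qed

lemma main_local:
  assumes "x \<in> VX" "y \<in> VX"
  shows "graph_dist TA (F x) (F y) \<le> 2 * graph_dist HADJ x y"
proof -
  have "(HADJ ^^ graph_dist HADJ x y) x y"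
    unfolding graph_dist_def using connected[OF assms] by (rule LeastI_ex)
  then obtain m where m: "m \<le> 2 * graph_dist HADJ x y" "(TA ^^ m) (F x) (F y)"
    using path_bound by blast
  have "graph_dist TA (F x) (F y) \<le> m" unfolding graph_dist_def using m(2) by (rule Least_le)
  thus ?thesis using m(1) by linarith
qed

end

theorem lemma6p2:
  fixes Z :: "'a::metric_space set" and r :: real and n :: nat
    and V :: "int \<Rightarrow> 'a set" and C :: "'c set" and \<U> :: "nat \<Rightarrow> 'c \<Rightarrow> 'a set set"
  assumes bdd: "bounded Z"
    and two: "\<exists>x\<in>Z. \<exists>y\<in>Z. x \<noteq> y"
    and r_pos: "0 < r" and r_le: "r \<le> 1/6"
    and V_max: "\<And>k. hyp_k0 Z r \<le> k \<Longrightarrow> maximal_separated Z (r powi k) (V k)"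
    and cdim: "has_cdim Z n"
    and r_small: "r < min (diameter Z) (1 / diameter Z)"
    and C_fin: "finite C" and C_card: "card C = n + 1"
    and U_open: "\<And>j c U. c \<in> C \<Longrightarrow> U \<in> \<U> j c \<Longrightarrow> openin (top_of_set Z) U"
    and U_disj: "\<And>j c. c \<in> C \<Longrightarrow> pairwise disjnt (\<U> j c)"
    and U_cover: "\<And>j. \<Union>(\<Union>c\<in>C. \<U> j c) = Z"
    and U_0: "\<And>c. c \<in> C \<Longrightarrow> \<U> 0 c = {Z}"
    and U_mesh: "\<And>j. j \<ge> 1 \<Longrightarrow> Sup (diameter ` (\<Union>c\<in>C. \<U> j c)) < r ^ j"
    and U_ball: "\<And>j v. v \<in> V (int j + 1) \<Longrightarrow> \<exists>U\<in>(\<Union>c\<in>C. \<U> j c). hball Z r (int j + 1) v \<subseteq> U"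
    and U_nest: "\<And>c j j' U U'. c \<in> C \<Longrightarrow> U \<in> \<U> j c \<Longrightarrow> U' \<in> \<U> j' c \<Longrightarrow> j' \<le> j \<Longrightarrow>
                   (j, U) \<noteq> (j', U') \<Longrightarrow> bigB Z r V j U \<subseteq> U' \<or> bigB Z r V j U \<inter> U' = {}"
  shows "\<forall>c\<in>C. \<forall>x\<in>hyp_vertices Z r V. \<forall>y\<in>hyp_vertices Z r V.
           graph_dist (tree_adj \<U> c) (fmap Z r \<U> c x) (fmap Z r \<U> c y)
             \<le> 2 * graph_dist (hyp_adj Z r V) x y"
  proof (intro ballI)
  fix c x y assume c: "c \<in> C" and x: "x \<in> hyp_vertices Z r V" and y: "y \<in> hyp_vertices Z r V"
  interpret S: setting Z r V \<U> c
  proof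
    show "\<And>j U. U \<in> \<U> j c \<Longrightarrow> U \<subseteq> Z"
      using U_open[OF c] by (metis openin_subset topspace_euclidean_subtopology)
    show "\<And>j. pairwise disjnt (\<U> j c)" using U_disj[OF c] .
    show "\<U> 0 c = {Z}" using U_0[OF c] .
    show "\<And>j j' U U'. U \<in> \<U> j c \<Longrightarrow> U' \<in> \<U> j' c \<Longrightarrow> j' \<le> j \<Longrightarrow>
                   (j, U) \<noteq> (j', U') \<Longrightarrow> bigB Z r V j U \<subseteq> U' \<or> bigB Z r V j U \<inter> U' = {}"
      using U_nest[OF c] by blast
  qed (use assms in auto)
  show "graph_dist (tree_adj \<U> c) (fmap Z r \<U> c x) (fmap Z r \<U> c y) \<le> 2 * graph_dist (hyp_adj Z r V) x y"
    using S.main_local[OF x y] .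
qed

end
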